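(* A finitely generated associative algebra $A$ is NC-complete if and only if it is Lie complete. Similarly, $A$ is NC-nilpotent if and only if it is Lie nilpotent.
   Context: $L_1=A$, $L_k=[A,L_{k-1}]$, $M_k=AL_kA$. The NC-filtration is $F_k=\sum_{m\ge1}\sum_{i_1+\cdots+i_m=k+m}M_{i_1}\cdots M_{i_m}$. $A$ is Lie complete (resp. NC-complete) if it is complete in the topology defined by the filtration $M_\bullet$ (resp. $F_\bullet$); $A$ is Lie nilpotent (resp. NC-nilpotent) if $M_N(A)=0$ (resp. $F_N(A)=0$) for some $N$. *)

theory Defs
  imports Complex_Main
begin

definition assoc_algebra :: "('k::field \<Rightarrow> 'a::ring_1 \<Rightarrow> 'a) \<Rightarrow> bool" where
  "assoc_algebra scale \<longleftrightarrow> vector_space scale \<and>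
     (\<forall>c x y. scale c (x * y) = scale c x * y) \<and>
     (\<forall>c x y. scale c (x * y) = x * scale c y)"

inductive_set gen_subalg :: "('k::field \<Rightarrow> 'a::ring_1 \<Rightarrow> 'a) \<Rightarrow> 'a set \<Rightarrow> 'a set"
  for scale :: "'k::field \<Rightarrow> 'a::ring_1 \<Rightarrow> 'a" and G :: "'a set" where
  gen: "g \<in> G \<Longrightarrow> g \<in> gen_subalg scale G"
| one: "1 \<in> gen_subalg scale G"
| add: "x \<in> gen_subalg scale G \<Longrightarrow> y \<in> gen_subalg scale G \<Longrightarrow> x + y \<in> gen_subalg scale G"
| mult: "x \<in> gen_subalg scale G \<Longrightarrow> y \<in> gen_subalg scale G \<Longrightarrow> x * y \<in> gen_subalg scale G"
| smult: "x \<in> gen_subalg scale G \<Longrightarrow> scale c x \<in> gen_subalg scale G"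

definition fin_gen_algebra :: "('k::field \<Rightarrow> 'a::ring_1 \<Rightarrow> 'a) \<Rightarrow> bool" where
  "fin_gen_algebra scale \<longleftrightarrow> (\<exists>G. finite G \<and> gen_subalg scale G = UNIV)"

text \<open>Lower central series: L_1 = A, L_(k+1) = [A, L_k] (k-span of commutators).
 Index 0 is unused and set to A.\<close>
primrec LCS :: "('k::field \<Rightarrow> 'a::ring_1 \<Rightarrow> 'a) \<Rightarrow> nat \<Rightarrow> 'a set" where
  "LCS scale 0 = UNIV"
| "LCS scale (Suc n) = (if n = 0 then UNIV
      else module.span scale {a * l - l * a | a l. l \<in> LCS scale n})"

definition Mser :: "('k::field \<Rightarrow> 'a::ring_1 \<Rightarrow> 'a) \<Rightarrow> nat \<Rightarrow> 'a set" where
  "Mser scale k = module.span scale {a * l * b | a l b. l \<in> LCS scale k}"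

text \<open>NC-filtration F_k = sum over m \<ge> 1 and i_1+...+i_m = k+m (all i_j \<ge> 1)
 of M_(i_1) ... M_(i_m); a product of subspaces is the span of products.\<close>
definition NCfilt :: "('k::field \<Rightarrow> 'a::ring_1 \<Rightarrow> 'a) \<Rightarrow> nat \<Rightarrow> 'a set" where
  "NCfilt scale k = module.span scale
     {prod_list xs | xs is. length is \<ge> 1 \<and> length xs = length is \<and>
        (\<forall>j \<in> set is. j \<ge> 1) \<and> sum_list is = k + length is \<and>
        (\<forall>j < length is. xs ! j \<in> Mser scale (is ! j))}"

text \<open>Completeness (and separatedness) with respect to a filtration F:
 the canonical map A \<rightarrow> lim A/F_k is bijective.\<close>
definition filt_complete :: "(nat \<Rightarrow> 'a::ring_1 set) \<Rightarrow> bool" where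
  "filt_complete F \<longleftrightarrow>
     (\<forall>x :: nat \<Rightarrow> 'a. (\<forall>k j. k \<le> j \<longrightarrow> x j - x k \<in> F k) \<longrightarrow>
        (\<exists>!a. \<forall>k. a - x k \<in> F k))"

definition Lie_complete :: "('k::field \<Rightarrow> 'a::ring_1 \<Rightarrow> 'a) \<Rightarrow> bool" where
  "Lie_complete scale \<longleftrightarrow> filt_complete (Mser scale)"

definition NC_complete :: "('k::field \<Rightarrow> 'a::ring_1 \<Rightarrow> 'a) \<Rightarrow> bool" where
  "NC_complete scale \<longleftrightarrow> filt_complete (NCfilt scale)"

definition Lie_nilpotent :: "('k::field \<Rightarrow> 'a::ring_1 \<Rightarrow> 'a) \<Rightarrow> bool" where
  "Lie_nilpotent scale \<longleftrightarrow> (\<exists>N. Mser scale N = {0})"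

definition NC_nilpotent :: "('k::field \<Rightarrow> 'a::ring_1 \<Rightarrow> 'a) \<Rightarrow> bool" where
  "NC_nilpotent scale \<longleftrightarrow> (\<exists>N. NCfilt scale N = {0})"

end

theory Submission
  imports Defs
begin



lemma complete_transfer:
  fixes F M :: "nat \<Rightarrow> 'a::ring_1 set"
  assumes Fa: "\<And>k x y. x \<in> F k \<Longrightarrow> y \<in> F k \<Longrightarrow> x + y \<in> F k"
    and Fd: "\<And>k x y. x \<in> F k \<Longrightarrow> y \<in> F k \<Longrightarrow> x - y \<in> F k"
    and F0: "\<And>k. 0 \<in> F k"
    and Ma: "\<And>k x y. x \<in> M k \<Longrightarrow> y \<in> M k \<Longrightarrow> x + y \<in> M k"
    and Md: "\<And>k x y. x \<in> M k \<Longrightarrow> y \<in> M k \<Longrightarrow> x - y \<in> M k"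
    and M0: "\<And>k. 0 \<in> M k"
    and MF: "\<And>k. M (Suc k) \<subseteq> F k"
    and FM: "\<And>k. \<exists>N. \<forall>n\<ge>N. F n \<subseteq> M k"
  shows "filt_complete F \<longleftrightarrow> filt_complete M"
proof -
  obtain Nf where Nf: "\<And>k n. n \<ge> Nf k \<Longrightarrow> F n \<subseteq> M k"
    using FM by metis
  define N' where "N' k = (\<Sum>i\<le>k. Nf i) + k" for k
  have N'mono: "N' k \<le> N' j" if "k \<le> j" for k j
  proof -
    have "(\<Sum>i\<le>k. Nf i) \<le> (\<Sum>i\<le>j. Nf i)"
      by (rule sum_mono2) (use that in auto)
    thus ?thesis using that unfolding N'_def by simp
  qed
  have N'ge: "Nf k \<le> N' k" "k \<le> N' k" for k
  proof -
    have "Nf k \<le> (\<Sum>i\<le>k. Nf i)"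
      by (rule member_le_sum) auto
    thus "Nf k \<le> N' k" unfolding N'_def by simp
    show "k \<le> N' k" unfolding N'_def by simp
  qed
  show ?thesis
  proof
    assume cF: "filt_complete F"
    show "filt_complete M"
      unfolding filt_complete_def
    proof (intro allI impI)
      fix x :: "nat \<Rightarrow> 'a"
      assume cx: "\<forall>k j. k \<le> j \<longrightarrow> x j - x k \<in> M k"
      have "\<forall>k j. k \<le> j \<longrightarrow> x (Suc j) - x (Suc k) \<in> F k"
        using cx MF by (meson Suc_le_mono subsetD)
      hence "\<exists>!a. \<forall>k. a - x (Suc k) \<in> F k"
        using cF[unfolded filt_complete_def, rule_format, of "\<lambda>k. x (Suc k)"] by simp
      then obtain a where a: "\<And>k. a - x (Suc k) \<in> F k" by blast
      have ex: "a - x k \<in> M k" for k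
      proof -
        define n where "n = max (Nf k) k"
        have "a - x (Suc n) \<in> M k" using a[of n] Nf[of k n] unfolding n_def by auto
        moreover have "x (Suc n) - x k \<in> M k" using cx unfolding n_def by auto
        ultimately have "(a - x (Suc n)) + (x (Suc n) - x k) \<in> M k" by (rule Ma)
        thus ?thesis by simp
      qed
      show "\<exists>!a. \<forall>k. a - x k \<in> M k"
      proof (rule ex1I[of _ a])
        show "\<forall>k. a - x k \<in> M k" using ex by blast
        fix b assume b: "\<forall>k. b - x k \<in> M k"
        have "b - a \<in> F k" for k
        proof -
          have "(b - x (Suc k)) - (a - x (Suc k)) \<in> M (Suc k)" using b ex Md by blast
          thus ?thesis using MF by auto
        qed
        moreover have "a - a \<in> F k" for k using F0 by simp
        moreover have "\<exists>!a'. \<forall>k. a' - a \<in> F k"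
          using cF[unfolded filt_complete_def, rule_format, of "\<lambda>_. a"] F0 by simp
        ultimately show "b = a" by blast
      qed
    qed
  next
    assume cM: "filt_complete M"
    show "filt_complete F"
      unfolding filt_complete_def
    proof (intro allI impI)
      fix x :: "nat \<Rightarrow> 'a"
      assume cx: "\<forall>k j. k \<le> j \<longrightarrow> x j - x k \<in> F k"
      have "\<forall>k j. k \<le> j \<longrightarrow> x (N' j) - x (N' k) \<in> M k"
        using cx Nf N'mono N'ge by (meson subsetD)
      hence "\<exists>!a. \<forall>k. a - x (N' k) \<in> M k"
        using cM[unfolded filt_complete_def, rule_format, of "\<lambda>k. x (N' k)"] by simp
      then obtain a where a: "\<And>k. a - x (N' k) \<in> M k" by blast
      have ex: "a - x k \<in> F k" for k
      proof -
        have "a - x (N' (Suc k)) \<in> F k" using a[of "Suc k"] MF by auto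
        moreover have "x (N' (Suc k)) - x k \<in> F k" using cx N'ge(2)[of "Suc k"] by auto
        ultimately have "(a - x (N' (Suc k))) + (x (N' (Suc k)) - x k) \<in> F k" by (rule Fa)
        thus ?thesis by simp
      qed
      show "\<exists>!a. \<forall>k. a - x k \<in> F k"
      proof (rule ex1I[of _ a])
        show "\<forall>k. a - x k \<in> F k" using ex by blast
        fix b assume b: "\<forall>k. b - x k \<in> F k"
        have "b - a \<in> M k" for k
        proof -
          have "(b - x (Nf k)) - (a - x (Nf k)) \<in> F (Nf k)" using b ex Fd by blast
          thus ?thesis using Nf[of k "Nf k"] by auto
        qed
        moreover have "a - a \<in> M k" for k using M0 by simp
        moreover have "\<exists>!a'. \<forall>k. a' - a \<in> M k"
          using cM[unfolded filt_complete_def, rule_format, of "\<lambda>_. a"] M0 by simp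
        ultimately show "b = a" by blast
      qed
    qed
  qed
qed




locale alg = vector_space scale
  for scale :: "'k::field_char_0 \<Rightarrow> 'a::ring_1 \<Rightarrow> 'a" (infixr \<open>*s\<close> 75) +
  assumes sl: "c *s (x * y) = (c *s x) * y"
    and sr: "c *s (x * y) = x * (c *s y)"
begin

abbreviation L where "L \<equiv> LCS scale"
abbreviation M where "M \<equiv> Mser scale"

lemma span_map:
  assumes x: "x \<in> span S" and W: "subspace W"
    and gen: "\<And>s. s \<in> S \<Longrightarrow> f s \<in> W"
    and add: "\<And>x y. f (x + y) = f x + f y"
    and sc: "\<And>c x. f (c *s x) = c *s f x"
  shows "f x \<in> W"
proof -
  have f0: "f 0 = 0" using sc[of 0 0] by simp
  have "subspace {x. f x \<in> W}"
    unfolding subspace_def using W f0 add sc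
    by (auto simp: subspace_0 subspace_add subspace_scale)
  then show ?thesis using span_induct[OF x, of "\<lambda>x. f x \<in> W"] gen by auto
qed

lemma span_bilin:
  assumes x: "x \<in> span S" and y: "y \<in> span T" and W: "subspace W"
    and gen: "\<And>s t. s \<in> S \<Longrightarrow> t \<in> T \<Longrightarrow> s * t \<in> W"
  shows "x * y \<in> W"
proof -
  have "s * y \<in> W" if "s \<in> S" for s
    by (rule span_map[OF y W, of "\<lambda>y. s * y"]) (use gen that in \<open>auto simp: distrib_left sr\<close>)
  then show ?thesis
    by (intro span_map[OF x W, of "\<lambda>x. x * y"]) (auto simp: distrib_right sl)
qed

lemma span_ideal:
  assumes x: "x \<in> span S"
    and gl: "\<And>s a. s \<in> S \<Longrightarrow> a * s \<in> span S"
    and gr: "\<And>s a. s \<in> S \<Longrightarrow> s * a \<in> span S"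
  shows "a * x \<in> span S" "x * a \<in> span S"
  by (rule span_map[OF x subspace_span, of "\<lambda>x. a * x"]; use gl in \<open>auto simp: distrib_left sr\<close>)
     (rule span_map[OF x subspace_span, of "\<lambda>x. x * a"]; use gr in \<open>auto simp: distrib_right sl\<close>)

lemma M_subspace: "subspace (M k)"
  unfolding Mser_def by simp

lemma M_ideal:
  assumes "x \<in> M k" shows "a * x \<in> M k" "x * a \<in> M k"
proof -
  have gl: "a * s \<in> span {a * l * b |a l b. l \<in> L k}" if "s \<in> {a * l * b |a l b. l \<in> L k}" for s a
    using that by (auto intro!: span_base simp: mult.assoc[symmetric]) (metis mult.assoc)
  have gr: "s * a \<in> span {a * l * b |a l b. l \<in> L k}" if "s \<in> {a * l * b |a l b. l \<in> L k}" for s a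
    using that by (auto intro!: span_base simp: mult.assoc)  (metis mult.assoc)
  show "a * x \<in> M k" "x * a \<in> M k"
    using span_ideal[OF assms[unfolded Mser_def] gl gr] unfolding Mser_def by auto
qed

lemma L_M: "l \<in> L k \<Longrightarrow> l \<in> M k"
proof -
  assume "l \<in> L k"
  hence "1 * l * 1 \<in> {a * l * b |a l b. l \<in> L k}" by blast
  thus ?thesis unfolding Mser_def by (intro span_base) simp
qed

lemma L_Suc: "i \<ge> 1 \<Longrightarrow> L (Suc i) = span {a * l - l * a |a l. l \<in> L i}"
  by simp

lemma L_subspace: "subspace (L k)"
  by (cases k) auto

lemma comm_in: "i \<ge> 1 \<Longrightarrow> l \<in> L i \<Longrightarrow> a * l - l * a \<in> L (Suc i)"
  by (auto intro!: span_base)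

lemma comm_in': "i \<ge> 1 \<Longrightarrow> l \<in> L i \<Longrightarrow> l * a - a * l \<in> L (Suc i)"
  using subspace_neg[OF L_subspace comm_in[of i l a]] by simp

lemma L_Suc_sub: "L (Suc n) \<subseteq> L n"
proof (induction n)
  case 0 then show ?case by simp
next
  case (Suc n)
  show ?case
  proof (cases "n = 0")
    case True then show ?thesis by simp
  next
    case False
    have "L (Suc (Suc n)) = span {a * l - l * a |a l. l \<in> L (Suc n)}" by simp
    also have "\<dots> \<subseteq> span {a * l - l * a |a l. l \<in> L n}"
      by (rule span_mono) (use Suc.IH in blast)
    also have "\<dots> = L (Suc n)" using False by simp
    finally show ?thesis .
  qed
qed

lemma L_anti: "j \<le> k \<Longrightarrow> L k \<subseteq> L j"
proof (induction k rule: dec_induct)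
  case base then show ?case by simp
next
  case (step n) then show ?case using L_Suc_sub[of n] by (meson order_trans)
qed

lemma M_anti: "j \<le> k \<Longrightarrow> M k \<subseteq> M j"
  unfolding Mser_def by (rule span_mono) (use L_anti in blast)

lemma M_UNIV: "M 1 = UNIV"
proof -
  have "x \<in> M 1" for x using L_M[of x 1] by simp
  thus ?thesis by auto
qed

end


context alg begin

lemma L2: "L 2 = span {a * l - l * a |a l. l \<in> L 1}"
  by (simp add: numeral_2_eq_2)
lemma L3: "L 3 = span {a * l - l * a |a l. l \<in> L 2}"
  by (simp add: numeral_3_eq_3 numeral_2_eq_2)

declare LCS.simps[simp del]

lemma delta_gen:
  assumes i: "i \<ge> 1" and m: "m \<in> L i"
  shows "(a*X - X*a)*m - m*(a*X - X*a) \<in> M (Suc (Suc i))"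
proof -
  have dX: "X*m - m*X \<in> L (Suc i)" and da: "a*m - m*a \<in> L (Suc i)"
    using comm_in[OF i m] by auto
  have 1: "a*(X*m - m*X) - (X*m - m*X)*a \<in> L (Suc (Suc i))"
    using comm_in[OF _ dX] by simp
  have 2: "(a*m - m*a)*X - X*(a*m - m*a) \<in> L (Suc (Suc i))"
    using comm_in'[OF _ da] by simp
  have "(a*X - X*a)*m - m*(a*X - X*a) =
     (a*(X*m - m*X) - (X*m - m*X)*a) + ((a*m - m*a)*X - X*(a*m - m*a))"
    by (simp add: algebra_simps)
  also have "\<dots> \<in> L (Suc (Suc i))"
    using 1 2 L_subspace subspace_add by blast
  finally show ?thesis by (rule L_M)
qed

lemma delta_lin:
  "(x + y)*m - m*(x + y) = (x*m - m*x) + (y*m - m*y)"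
  "(c *s x)*m - m*(c *s x) = c *s (x*m - m*x)"
  by (simp_all add: algebra_simps sl[symmetric] sr[symmetric] scale_right_diff_distrib)

lemma delta_L2:
  assumes i: "i \<ge> 1" and m: "m \<in> L i" and z: "z \<in> L 2"
  shows "z*m - m*z \<in> M (Suc (Suc i))"
  using z unfolding L2
  by (rule span_map[OF _ M_subspace, where f="\<lambda>z. z*m - m*z"])
     (auto intro: delta_gen[OF i m] simp: delta_lin)

lemma key_gen:
  assumes i: "i \<ge> 1" and m: "m \<in> L i" and z: "z \<in> L 2"
  shows "(u*m - m*u)*(a*z - z*a) \<in> M (Suc (Suc i))"
proof -
  let ?d = "\<lambda>X. X*m - m*X"
  have e: "(u*m - m*u)*(a*z - z*a) =
     ?d (a*(u*z) - (u*z)*a) - ?d (a*u - u*a) * z - (a*u - u*a) * ?d z - u * ?d (a*z - z*a)"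
    by (simp add: algebra_simps)
  have t1: "?d (a*(u*z) - (u*z)*a) \<in> M (Suc (Suc i))" by (rule delta_gen[OF i m])
  have t2: "?d (a*u - u*a) * z \<in> M (Suc (Suc i))" by (rule M_ideal(2)[OF delta_gen[OF i m]])
  have t3: "(a*u - u*a) * ?d z \<in> M (Suc (Suc i))" by (rule M_ideal(1)[OF delta_L2[OF i m z]])
  have t4: "u * ?d (a*z - z*a) \<in> M (Suc (Suc i))" by (rule M_ideal(1)[OF delta_gen[OF i m]])
  show ?thesis unfolding e using t1 t2 t3 t4 M_subspace subspace_diff by metis
qed

lemma L_L3:
  assumes i: "i \<ge> 1" and l: "l \<in> L (Suc i)" and w: "w \<in> L 3"
  shows "l * w \<in> M (Suc (Suc i))"
proof -
  have l': "l \<in> span {a * l - l * a |a l. l \<in> L i}" using l i L_Suc by simp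
  show ?thesis
    by (rule span_bilin[OF l' w[unfolded L3] M_subspace]) (auto intro: key_gen[OF i])
qed

lemma M_M3:
  assumes i: "i \<ge> 1" and x: "x \<in> M (Suc i)" and y: "y \<in> M 3"
  shows "x * y \<in> M (Suc (Suc i))"
proof -
  have g: "l * c * w \<in> M (Suc (Suc i))" if l: "l \<in> L (Suc i)" and w: "w \<in> L 3" for l c w
  proof -
    have "l * c * w = c * (l * w) + (l * c - c * l) * w" by (simp add: algebra_simps)
    moreover have "c * (l * w) \<in> M (Suc (Suc i))" by (rule M_ideal(1)[OF L_L3[OF i l w]])
    moreover have "(l * c - c * l) * w \<in> M (Suc (Suc i))"
    proof -
      have cl: "l*c - c*l \<in> L (Suc (Suc i))" using comm_in'[of "Suc i" l c] l by simp
      show ?thesis by (rule M_ideal(2)[OF L_M[OF cl]])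
    qed
    ultimately show ?thesis using M_subspace subspace_add by metis
  qed
  show ?thesis
    using x[unfolded Mser_def] y[unfolded Mser_def]
  proof (rule span_bilin[OF _ _ M_subspace])
    fix s t assume "s \<in> {a * l * b |a l b. l \<in> L (Suc i)}" "t \<in> {a * l * b |a l b. l \<in> L 3}"
    then obtain a l b a' w b' where s: "s = a * l * b" "l \<in> L (Suc i)" and
      t: "t = a' * w * b'" "w \<in> L 3" by blast
    have "s * t = a * (l * (b * a') * w) * b'" unfolding s t by (simp add: mult.assoc)
    thus "s * t \<in> M (Suc (Suc i))" using g[OF s(2) t(2)] M_ideal by metis
  qed
qed

end


context alg begin

lemma L1: "L 1 = UNIV" by (simp add: LCS.simps)

lemma c_sq:
  assumes c: "c = x*y - y*x"
  shows "c*c \<in> M 3"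
proof -
  have l2: "x*(y*y) - (y*y)*x \<in> L 2" using comm_in[of 1 "y*y" x] L1 by (simp add: numeral_2_eq_2)
  have A: "x*(x*(y*y) - (y*y)*x) - (x*(y*y) - (y*y)*x)*x \<in> L 3"
    using comm_in[OF _ l2] by (simp add: numeral_3_eq_3 numeral_2_eq_2)
  have c2: "c \<in> L 2" unfolding c using comm_in[of 1 y x] L1 by (simp add: numeral_2_eq_2)
  have B: "x*c - c*x \<in> L 3" using comm_in[OF _ c2] by (simp add: numeral_3_eq_3 numeral_2_eq_2)
  have AM: "x*(x*(y*y) - (y*y)*x) - (x*(y*y) - (y*y)*x)*x \<in> M 3" by (rule L_M[OF A])
  have BM1: "(x*c - c*x) * y \<in> M 3" by (rule M_ideal(2)[OF L_M[OF B]])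
  have BM2: "y * (x*c - c*x) \<in> M 3" by (rule M_ideal(1)[OF L_M[OF B]])
  have e: "c*c + c*c = (x*(x*(y*y) - (y*y)*x) - (x*(y*y) - (y*y)*x)*x) - (x*c - c*x) * y - y * (x*c - c*x)"
    unfolding c by (simp add: algebra_simps)
  have "c*c + c*c \<in> M 3" unfolding e using AM BM1 BM2 M_subspace subspace_diff by metis
  moreover have "c*c + c*c = (2::'k) *s (c*c)"
    using scale_left_distrib[of 1 1 "c*c"] by simp
  ultimately have "(2::'k) *s (c*c) \<in> M 3" by simp
  hence "(1/2::'k) *s ((2::'k) *s (c*c)) \<in> M 3" using M_subspace subspace_scale by blast
  thus ?thesis by simp
qed

lemma cyc:
  assumes c: "c = x*y - y*x"
  shows "c*z*c \<in> M 3"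
proof -
  have c2: "c \<in> L 2" unfolding c using comm_in[of 1 y x] L1 by (simp add: numeral_2_eq_2)
  have B: "c*z - z*c \<in> L 3" using comm_in'[OF _ c2] by (simp add: numeral_3_eq_3 numeral_2_eq_2)
  have "c*z*c = z*(c*c) + (c*z - z*c)*c" by (simp add: algebra_simps)
  moreover have "z*(c*c) \<in> M 3" by (rule M_ideal(1)[OF c_sq[OF c]])
  moreover have "(c*z - z*c)*c \<in> M 3" by (rule M_ideal(2)[OF L_M[OF B]])
  ultimately show ?thesis using M_subspace subspace_add by metis
qed

lemma prod_ideal:
  assumes "y \<in> set ys" "y \<in> M k" shows "prod_list ys \<in> M k"
proof -
  obtain us vs where "ys = us @ y # vs" using split_list[OF assms(1)] by blast
  hence "prod_list ys = prod_list us * (y * prod_list vs)" by simp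
  thus ?thesis using M_ideal assms(2) by metis
qed

definition gens :: "'a set \<Rightarrow> 'a set" where
  "gens S = M 3 \<union> {a*c*b | a b c. c \<in> S}"

lemma pig:
  "finite S \<Longrightarrow> (\<forall>c\<in>S. \<forall>z. c*z*c \<in> M 3) \<Longrightarrow> set ys \<subseteq> gens S \<Longrightarrow> card S < length ys
   \<Longrightarrow> prod_list ys \<in> M 3"
proof (induction ys arbitrary: S)
  case Nil then show ?case by simp
next
  case (Cons y ys)
  show ?case
  proof (cases "y \<in> M 3")
    case True then show ?thesis using prod_ideal[of y "y#ys"] by simp
  next
    case False
    then obtain a b c where y: "y = a*c*b" "c \<in> S" using Cons.prems(3) unfolding gens_def by auto
    show ?thesis
    proof (cases "set ys \<subseteq> gens (S - {c})")
      case True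
      have "card S > 0" using Cons.prems(1) y(2) card_gt_0_iff by blast
      hence "card (S - {c}) < length ys" using Cons.prems(1,4) y(2)
        by (simp add: card_Diff_singleton)
      hence "prod_list ys \<in> M 3" using Cons.IH[of "S - {c}"] Cons.prems(1,2) True by auto
      thus ?thesis using M_ideal by simp
    next
      case False
      then obtain y' where y'in: "y' \<in> set ys" and y'n: "y' \<notin> gens (S - {c})" by blast
      have "y' \<in> gens S" using Cons.prems(3) y'in by auto
      then obtain a' b' where y': "y' = a'*c*b'" using y'n unfolding gens_def by blast
      obtain us vs where ys: "ys = us @ y' # vs" using split_list[OF y'in] by blast
      have "prod_list (y # ys) = (a * (c * (b * prod_list us * a') * c)) * (b' * prod_list vs)"
        unfolding ys y y' by (simp add: mult.assoc)
      moreover have "c * (b * prod_list us * a') * c \<in> M 3" using Cons.prems(2) y(2) by blast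
      ultimately show ?thesis using M_ideal by metis
    qed
  qed
qed

lemma multi_aux:
  assumes W: "subspace W"
    and H: "\<And>ys. set ys \<subseteq> G \<Longrightarrow> length ys = n \<Longrightarrow> prod_list ys \<in> W"
  shows "set xs \<subseteq> span G \<Longrightarrow> set pre \<subseteq> G \<Longrightarrow> length pre + length xs = n
    \<Longrightarrow> prod_list pre * prod_list xs \<in> W"
proof (induction xs arbitrary: pre)
  case Nil then show ?case using H by simp
next
  case (Cons x xs)
  have x: "x \<in> span G" using Cons.prems by simp
  have "prod_list pre * (x * prod_list xs) \<in> W"
  proof (rule span_map[OF x W, where f="\<lambda>x. prod_list pre * (x * prod_list xs)"])
    fix g assume g: "g \<in> G"
    have "prod_list (pre @ [g]) * prod_list xs \<in> W"
      using Cons.IH[of "pre @ [g]"] Cons.prems g by auto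
    thus "prod_list pre * (g * prod_list xs) \<in> W" by (simp add: mult.assoc)
  qed (simp_all add: algebra_simps sl[symmetric] sr[symmetric])
  thus ?case by simp
qed

end


context alg begin

lemma Y_ideal:
  assumes "x \<in> span (gens S)" shows "a * x \<in> span (gens S)" "x * a \<in> span (gens S)"
proof -
  have gl: "a * s \<in> span (gens S)" if sin: "s \<in> gens S" for s a
  proof (cases "s \<in> M 3")
    case True then show ?thesis using M_ideal by (auto simp: gens_def intro!: span_base)
  next
    case False
    then obtain a' c b where "s = a'*c*b" "c \<in> S" using sin False unfolding gens_def by auto
    hence "a * s = (a*a')*c*b" by (simp add: mult.assoc)
    thus ?thesis using \<open>c \<in> S\<close> by (auto simp: gens_def intro!: span_base)
  qed
  have gr: "s * a \<in> span (gens S)" if sin: "s \<in> gens S" for s a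
  proof (cases "s \<in> M 3")
    case True then show ?thesis using M_ideal by (auto simp: gens_def intro!: span_base)
  next
    case False
    then obtain a' c b where "s = a'*c*b" "c \<in> S" using sin False unfolding gens_def by auto
    hence "s * a = a'*c*(b*a)" by (simp add: mult.assoc)
    thus ?thesis using \<open>c \<in> S\<close> by (auto simp: gens_def intro!: span_base)
  qed
  show "a * x \<in> span (gens S)" "x * a \<in> span (gens S)"
    using span_ideal[OF assms gl gr] by auto
qed

lemma absorb:
  "(\<forall>p\<in>set ps. P p \<longrightarrow> f p \<in> M k) \<Longrightarrow> filter P ps \<noteq> [] \<Longrightarrow>
   \<exists>ys. length ys = length (filter P ps) \<and> set ys \<subseteq> M k \<and> prod_list ys = prod_list (map f ps)"
proof (induction ps)
  case Nil then show ?case by simp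
next
  case (Cons p ps)
  show ?case
  proof (cases "P p")
    case True
    show ?thesis
    proof (cases "filter P ps = []")
      case True
      have "f p * prod_list (map f ps) \<in> M k" using Cons.prems \<open>P p\<close> M_ideal by auto
      then show ?thesis using True \<open>P p\<close>
        by (intro exI[of _ "[f p * prod_list (map f ps)]"]) simp
    next
      case False
      then obtain ys where "length ys = length (filter P ps)" "set ys \<subseteq> M k"
        "prod_list ys = prod_list (map f ps)" using Cons by auto
      then show ?thesis using \<open>P p\<close> Cons.prems by (intro exI[of _ "f p # ys"]) auto
    qed
  next
    case False
    then obtain ys where ys: "length ys = length (filter P ps)" "set ys \<subseteq> M k"
      "prod_list ys = prod_list (map f ps)" using Cons by auto
    have "ys \<noteq> []" using ys(1) Cons.prems(2) False by auto
    then obtain y ys' where yy: "ys = y # ys'" by (cases ys) auto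
    have "f p * y \<in> M k" using ys(2) yy M_ideal by auto
    then show ?thesis using False ys yy
      by (intro exI[of _ "(f p * y) # ys'"]) (auto simp: mult.assoc)
  qed
qed

lemma sum_bound:
  "\<forall>p\<in>set ps. 1 \<le> snd p \<and> snd p \<le> K + 1 \<Longrightarrow>
   sum_list (map snd ps) \<le> length ps + K * length (filter (\<lambda>p. 2 \<le> snd p) ps)"
  for ps :: "('b \<times> nat) list"
proof (induction ps)
  case Nil then show ?case by simp
next
  case (Cons p ps)
  then have "sum_list (map snd ps) \<le> length ps + K * length (filter (\<lambda>p. 2 \<le> snd p) ps)" by simp
  moreover have "1 \<le> snd p" "snd p \<le> K + 1" using Cons.prems by auto
  ultimately show ?case by (cases "2 \<le> snd p") auto
qed

context
  fixes G assumes finG: "finite G" and genG: "gen_subalg scale G = UNIV"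
begin

abbreviation "SG \<equiv> {g*h - h*g | g h. g \<in> G \<and> h \<in> G}"

lemma SG_finite: "finite SG"
proof -
  have "SG = (\<lambda>(g,h). g*h - h*g) ` (G \<times> G)" by auto
  thus ?thesis using finG by simp
qed

lemma comm_base:
  assumes g: "g \<in> G" and y: "y \<in> gen_subalg scale G"
  shows "g*y - y*g \<in> span (gens SG)"
  using y
proof (induction y rule: gen_subalg.induct)
  case (gen h)
  have "1*(g*h - h*g)*1 \<in> gens SG" unfolding gens_def using g gen by blast
  then show ?case by (intro span_base) simp
next
  case one then show ?case by (simp add: span_zero)
next
  case (add x y)
  have "g*(x+y) - (x+y)*g = (g*x - x*g) + (g*y - y*g)" by (simp add: algebra_simps)
  then show ?case using span_add[OF add.IH(1) add.IH(2)] by simp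
next
  case (mult x y)
  have "g*(x*y) - (x*y)*g = (g*x - x*g)*y + x*(g*y - y*g)" by (simp add: algebra_simps)
  then show ?case using span_add[OF Y_ideal(2)[OF mult.IH(1)] Y_ideal(1)[OF mult.IH(2)]] by simp
next
  case (smult x c)
  have "g*(c *s x) - (c *s x)*g = c *s (g*x - x*g)"
    by (simp add: sl[symmetric] sr[symmetric] scale_right_diff_distrib)
  then show ?case using span_scale[OF smult.IH] by simp
qed

lemma comm_Y:
  assumes x: "x \<in> gen_subalg scale G" and y: "y \<in> gen_subalg scale G"
  shows "x*y - y*x \<in> span (gens SG)"
  using x
proof (induction x rule: gen_subalg.induct)
  case (gen g)
  then show ?case using comm_base[OF gen y] by simp
next
  case one then show ?case by (simp add: span_zero)
next
  case (add x z)
  have "(x+z)*y - y*(x+z) = (x*y - y*x) + (z*y - y*z)" by (simp add: algebra_simps)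
  then show ?case using span_add[OF add.IH(1) add.IH(2)] by simp
next
  case (mult x z)
  have "(x*z)*y - y*(x*z) = x*(z*y - y*z) + (x*y - y*x)*z" by (simp add: algebra_simps)
  then show ?case using span_add[OF Y_ideal(1)[OF mult.IH(2)] Y_ideal(2)[OF mult.IH(1)]] by simp
next
  case (smult x c)
  have "(c *s x)*y - y*(c *s x) = c *s (x*y - y*x)"
    by (simp add: sl[symmetric] sr[symmetric] scale_right_diff_distrib)
  then show ?case using span_scale[OF smult.IH] by simp
qed

lemma M2_Y: "M 2 \<subseteq> span (gens SG)"
proof -
  have L2Y: "L 2 \<subseteq> span (gens SG)"
    unfolding L2
  proof (rule span_minimal[OF _ subspace_span])
    show "{a * l - l * a |a l. l \<in> L 1} \<subseteq> span (gens SG)"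
      using comm_Y genG by auto
  qed
  show ?thesis unfolding Mser_def
  proof (rule span_minimal[OF _ subspace_span])
    show "{a * l * b |a l b. l \<in> L 2} \<subseteq> span (gens SG)"
      using L2Y Y_ideal by blast
  qed
qed

lemma M2pow:
  assumes xs: "set xs \<subseteq> M 2" and len: "length xs \<ge> card SG + 1"
  shows "prod_list xs \<in> M 3"
proof -
  define n where "n = card SG + 1"
  have cycS: "\<forall>c\<in>SG. \<forall>z. c*z*c \<in> M 3" using cyc by blast
  have H: "prod_list ys \<in> M 3" if "set ys \<subseteq> gens SG" "length ys = n" for ys
    using pig[OF SG_finite cycS that(1)] that(2) unfolding n_def by simp
  have "set (take n xs) \<subseteq> set xs" by (rule set_take_subset)
  hence "set (take n xs) \<subseteq> span (gens SG)" using xs M2_Y by (meson order_trans)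
  moreover have "length (take n xs) = n" using len unfolding n_def by simp
  ultimately have "prod_list [] * prod_list (take n xs) \<in> M 3"
    using multi_aux[OF M_subspace H, where xs="take n xs" and pre="[]"] by simp
  hence "prod_list (take n xs) * prod_list (drop n xs) \<in> M 3" using M_ideal by simp
  moreover have "prod_list xs = prod_list (take n xs) * prod_list (drop n xs)"
    by (subst append_take_drop_id[symmetric, of xs n]) (simp only: prod_list.append)
  ultimately show ?thesis by simp
qed

lemma Ppow:
  "set xs \<subseteq> M 2 \<Longrightarrow> length xs \<ge> (card SG + 1) * d + 1 \<Longrightarrow> prod_list xs \<in> M (d + 2)"
proof (induction d arbitrary: xs)
  case 0
  then obtain y where "y \<in> set xs" by (cases xs) auto
  then have "prod_list xs \<in> M 2" using prod_ideal[of y xs 2] 0 by auto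
  then show ?case by (simp add: numeral_2_eq_2)
next
  case (Suc d)
  define n where "n = length xs - (card SG + 1)"
  have "prod_list (take n xs) \<in> M (d + 2)"
    using Suc.IH[of "take n xs"] Suc.prems set_take_subset[of n xs] unfolding n_def by auto
  moreover have "prod_list (drop n xs) \<in> M 3"
    using M2pow[of "drop n xs"] Suc.prems set_drop_subset[of n xs] unfolding n_def by auto
  ultimately have "prod_list (take n xs) * prod_list (drop n xs) \<in> M (Suc (Suc (Suc d)))"
    using M_M3[of "Suc d"] by simp
  moreover have "prod_list xs = prod_list (take n xs) * prod_list (drop n xs)"
    by (subst append_take_drop_id[symmetric, of xs n]) (simp only: prod_list.append)
  ultimately show ?case by (simp add: numeral_2_eq_2)
qed

end
end


context alg begin

lemma F_sub:
  assumes finG: "finite G" and genG: "gen_subalg scale G = UNIV"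
    and k: "k \<ge> 2" and n: "n \<ge> (k-2)*((card {g*h - h*g | g h. g \<in> G \<and> h \<in> G} + 1)*(k-2)+1) + 1"
  shows "NCfilt scale n \<subseteq> M k"
  unfolding NCfilt_def
proof (rule span_minimal[OF _ M_subspace], rule subsetI)
  let ?T = "card {g*h - h*g | g h. g \<in> G \<and> h \<in> G} + 1"
  define R where "R = ?T*(k-2)+1"
  fix x assume "x \<in> {prod_list xs |xs is. 1 \<le> length is \<and> length xs = length is \<and>
        (\<forall>j\<in>set is. 1 \<le> j) \<and> sum_list is = n + length is \<and> (\<forall>j<length is. xs ! j \<in> M (is ! j))}"
  then obtain xs "is" where x: "x = prod_list xs" and len: "length xs = length is"
    and pos: "\<forall>j\<in>set is. 1 \<le> j" and sm: "sum_list is = n + length is"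
    and mem: "\<forall>j<length is. xs ! j \<in> M (is ! j)" by blast
  show "x \<in> M k"
  proof (cases "\<exists>j<length is. is ! j \<ge> k")
    case True
    then obtain j where j: "j < length is" "is ! j \<ge> k" by blast
    have "xs ! j \<in> M k" using mem j M_anti[OF j(2)] by blast
    moreover have "xs ! j \<in> set xs" using j(1) len by simp
    ultimately show ?thesis unfolding x using prod_ideal by blast
  next
    case False
    define ps where "ps = zip xs is"
    have pset: "1 \<le> snd p \<and> snd p \<le> (k-2)+1 \<and> (2 \<le> snd p \<longrightarrow> fst p \<in> M 2)" if pin: "p \<in> set ps" for p
    proof -
      obtain j where j: "j < length is" "p = (xs ! j, is ! j)"
        using pin len unfolding ps_def by (auto simp: set_zip)
      have "is ! j \<in> set is" using j(1) by simp
      moreover have "2 \<le> is ! j \<longrightarrow> xs ! j \<in> M 2" using mem j(1) M_anti by blast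
      ultimately show ?thesis using j False pos k by auto
    qed
    have ms: "map snd ps = is" "map fst ps = xs" "length ps = length is"
      unfolding ps_def using len by auto
    define cnt where "cnt = length (filter (\<lambda>p. 2 \<le> snd p) ps)"
    have "sum_list (map snd ps) \<le> length ps + (k-2) * cnt"
      unfolding cnt_def by (rule sum_bound) (use pset in blast)
    hence "n \<le> (k-2) * cnt" using sm ms by simp
    moreover have "(k-2)*R + 1 \<le> n" using n unfolding R_def by simp
    ultimately have "(k-2) * R < (k-2) * cnt" by linarith
    hence Rc: "R < cnt" by simp
    hence ne: "filter (\<lambda>p. 2 \<le> snd p) ps \<noteq> []" unfolding cnt_def by auto
    obtain ys where ys: "length ys = cnt" "set ys \<subseteq> M 2" "prod_list ys = prod_list (map fst ps)"
      using absorb[of ps "\<lambda>p. 2 \<le> snd p" fst 2, OF _ ne] pset unfolding cnt_def by blast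
    have "prod_list ys \<in> M (k - 2 + 2)"
      using Ppow[OF finG genG ys(2), of "k-2"] ys(1) Rc unfolding R_def by simp
    moreover have "k - 2 + 2 = k" using k by simp
    ultimately show ?thesis using ys(3) ms x by simp
  qed
qed

lemma MF: "M (Suc k) \<subseteq> NCfilt scale k"
proof
  fix x assume "x \<in> M (Suc k)"
  hence "prod_list [x] \<in> {prod_list xs |xs is. 1 \<le> length is \<and> length xs = length is \<and>
        (\<forall>j\<in>set is. 1 \<le> j) \<and> sum_list is = k + length is \<and> (\<forall>j<length is. xs ! j \<in> M (is ! j))}"
    by (intro CollectI exI[of _ "[x]"] exI[of _ "[Suc k]"]) simp
  thus "x \<in> NCfilt scale k" unfolding NCfilt_def by (auto intro: span_base)
qed

lemma F_subspace: "subspace (NCfilt scale k)"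
  unfolding NCfilt_def by simp

end

theorem claim2p4:
  fixes scale :: "'k::field_char_0 \<Rightarrow> 'a::ring_1 \<Rightarrow> 'a"
  assumes "assoc_algebra scale"
    and "fin_gen_algebra scale"
  shows "(NC_complete scale \<longleftrightarrow> Lie_complete scale) \<and>
         (NC_nilpotent scale \<longleftrightarrow> Lie_nilpotent scale)"
proof -
  interpret A: alg scale
    using assms(1) unfolding assoc_algebra_def alg_def alg_axioms_def by auto
  obtain G where finG: "finite G" and genG: "gen_subalg scale G = UNIV"
    using assms(2) unfolding fin_gen_algebra_def by blast
  have FM: "\<exists>N. \<forall>n\<ge>N. NCfilt scale n \<subseteq> Mser scale k" for k
  proof (cases "k \<ge> 2")
    case True
    then show ?thesis using A.F_sub[OF finG genG True] by blast
  next
    case False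
    hence "Mser scale 1 \<subseteq> Mser scale k" by (intro A.M_anti) simp
    hence "Mser scale k = UNIV" using A.M_UNIV by auto
    thus ?thesis by auto
  qed
  have c: "NC_complete scale \<longleftrightarrow> Lie_complete scale"
    unfolding NC_complete_def Lie_complete_def
  proof (rule complete_transfer)
    show "x + y \<in> NCfilt scale k" if "x \<in> NCfilt scale k" "y \<in> NCfilt scale k" for k x y
      using A.subspace_add[OF A.F_subspace that] .
    show "x - y \<in> NCfilt scale k" if "x \<in> NCfilt scale k" "y \<in> NCfilt scale k" for k x y
      using A.subspace_diff[OF A.F_subspace that] .
    show "0 \<in> NCfilt scale k" for k using A.subspace_0[OF A.F_subspace] .
    show "x + y \<in> Mser scale k" if "x \<in> Mser scale k" "y \<in> Mser scale k" for k x y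
      using A.subspace_add[OF A.M_subspace that] .
    show "x - y \<in> Mser scale k" if "x \<in> Mser scale k" "y \<in> Mser scale k" for k x y
      using A.subspace_diff[OF A.M_subspace that] .
    show "0 \<in> Mser scale k" for k using A.subspace_0[OF A.M_subspace] .
    show "Mser scale (Suc k) \<subseteq> NCfilt scale k" for k by (rule A.MF)
    show "\<exists>N. \<forall>n\<ge>N. NCfilt scale n \<subseteq> Mser scale k" for k by (rule FM)
  qed
  have n: "NC_nilpotent scale \<longleftrightarrow> Lie_nilpotent scale"
    unfolding NC_nilpotent_def Lie_nilpotent_def
  proof
    assume "\<exists>N. NCfilt scale N = {0}"
    then obtain N where "NCfilt scale N = {0}" by blast
    hence "Mser scale (Suc N) \<subseteq> {0}" using A.MF[of N] by simp
    hence "Mser scale (Suc N) = {0}" using A.subspace_0[OF A.M_subspace] by blast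
    thus "\<exists>N. Mser scale N = {0}" by blast
  next
    assume "\<exists>N. Mser scale N = {0}"
    then obtain K where K: "Mser scale K = {0}" by blast
    obtain N where "\<forall>n\<ge>N. NCfilt scale n \<subseteq> Mser scale K" using FM by blast
    hence "NCfilt scale N \<subseteq> {0}" using K by auto
    hence "NCfilt scale N = {0}" using A.subspace_0[OF A.F_subspace] by blast
    thus "\<exists>N. NCfilt scale N = {0}" by blast
  qed
  show ?thesis using c n by blast
qed



end
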